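(* Assume $2k+1 \le n/4$. Consider the random hard instance $\mathcal{D}$ and any randomized algorithm that makes exactly $n/4$ comparison queries and outputs a set $S$ of $2k+1$ elements. Let $C$ be the set of critical elements and $T$ the (random) set of elements that appear in at least one query made by the algorithm. Then $$\mathbb{E}[|S \cap C|] \le \frac{\mathbb{E}[|C \cap T|]}{2} + \frac{2k+1}{2}.$$
   Context: Model: $n$ elements, exactly $k$ corrupted; a tournament (comparison graph) says for each pair which is larger; restricted to uncorrupted elements it is acyclic, comparisons involving corrupted elements arbitrary. A comparison query reveals the orientation of one pair. Random hard instance $\mathcal{D}$: take $2k+1$ critical elements $c_0,\dots,c_{2k}$ consisting of the $k$ corrupted elements and the top $k+1$ uncorrupted elements, with comparisons among them forming the cyclic tournament in which $c_i$ is larger than $c_{i+1},\dots,c_{i+k}$ (indices mod $2k+1$); every critical element is larger than every non-critical element, and the $n-2k-1$ non-critical (uncorrupted) elements are totally ordered; then the labels (indices) of all $n$ elements are permuted uniformly at random. The set of critical elements is denoted $C$. Expectations are over the instance randomness and the algorithm's randomness. *)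

theory Defs
  imports "HOL-Probability.Probability" "HOL-Combinatorics.Permutations"
begin

text \<open>The random instance is given by a uniformly random
  bijection pos (pos permutes {0..<n}); element a sits at position pos a.
  Positions 0..2k are the critical elements c_0..c_2k, positions 2k+1..n-1 are
  the non-critical elements (smaller position = larger element).
  base_beats k p q: the element at position p is larger than the one at q.\<close>

definition base_beats :: "nat \<Rightarrow> nat \<Rightarrow> nat \<Rightarrow> bool" where
  "base_beats k p q =
    (if p < 2*k+1 \<and> q < 2*k+1 then (q + (2*k+1) - p) mod (2*k+1) \<in> {1..k}
     else if p < 2*k+1 then True
     else if q < 2*k+1 then False
     else p < q)"

definition hard_tournament :: "nat \<Rightarrow> (nat \<Rightarrow> nat) \<Rightarrow> nat \<Rightarrow> nat \<Rightarrow> bool" where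
  "hard_tournament k pos a b = base_beats k (pos a) (pos b)"

definition critical_set :: "nat \<Rightarrow> nat \<Rightarrow> (nat \<Rightarrow> nat) \<Rightarrow> nat set" where
  "critical_set k n pos = {a. a < n \<and> pos a < 2*k+1}"

text \<open>A deterministic adaptive query strategy Q maps the answers seen so far
  to the next queried pair; G a b is the answer "a is larger than b".\<close>

fun run_hist :: "(bool list \<Rightarrow> nat \<times> nat) \<Rightarrow> (nat \<Rightarrow> nat \<Rightarrow> bool) \<Rightarrow> nat \<Rightarrow> bool list" where
  "run_hist Q G 0 = []"
| "run_hist Q G (Suc i) = run_hist Q G i @ [G (fst (Q (run_hist Q G i))) (snd (Q (run_hist Q G i)))]"

definition queried_set :: "(bool list \<Rightarrow> nat \<times> nat) \<Rightarrow> (nat \<Rightarrow> nat \<Rightarrow> bool) \<Rightarrow> nat \<Rightarrow> nat set" where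
  "queried_set Q G m = (\<Union>i<m. {fst (Q (run_hist Q G i)), snd (Q (run_hist Q G i))})"

definition instance_pmf :: "nat \<Rightarrow> (nat \<Rightarrow> nat) pmf" where
  "instance_pmf n = pmf_of_set {pos. pos permutes {0..<n}}"

end

theory Submission
  imports Defs
begin

lemma length_run_hist[simp]: "length (run_hist Q G i) = i"
  by (induction i) auto

lemma hist_eq:
  assumes "\<And>x y. x \<in> queried_set Q G m \<Longrightarrow> y \<in> queried_set Q G m \<Longrightarrow> G x y = G' x y"
  shows "i \<le> m \<Longrightarrow> run_hist Q G' i = run_hist Q G i"
proof (induction i)
  case 0 then show ?case by simp
next
  case (Suc i)
  then have im: "i < m" by simp
  have e: "run_hist Q G' i = run_hist Q G i" using Suc by simp
  have "fst (Q (run_hist Q G i)) \<in> queried_set Q G m" "snd (Q (run_hist Q G i)) \<in> queried_set Q G m"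
    using im unfolding queried_set_def by auto
  then show ?case using e assms by simp
qed

lemma swap_inv:
  assumes "a \<notin> queried_set Q (hard_tournament k pos) m" "b \<notin> queried_set Q (hard_tournament k pos) m"
  shows "run_hist Q (hard_tournament k (pos \<circ> Transposition.transpose a b)) m = run_hist Q (hard_tournament k pos) m"
    "queried_set Q (hard_tournament k (pos \<circ> Transposition.transpose a b)) m = queried_set Q (hard_tournament k pos) m"
proof -
  have h: "\<And>i. i \<le> m \<Longrightarrow> run_hist Q (hard_tournament k (pos \<circ> Transposition.transpose a b)) i = run_hist Q (hard_tournament k pos) i"
  proof (rule hist_eq)
    fix x y assume "x \<in> queried_set Q (hard_tournament k pos) m" "y \<in> queried_set Q (hard_tournament k pos) m"
    then have "Transposition.transpose a b x = x" "Transposition.transpose a b y = y"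
      using assms by (metis transpose_apply_other)+
    then show "hard_tournament k pos x y = hard_tournament k (pos \<circ> Transposition.transpose a b) x y"
      by (simp add: hard_tournament_def)
  qed
  show "run_hist Q (hard_tournament k (pos \<circ> Transposition.transpose a b)) m = run_hist Q (hard_tournament k pos) m"
    using h by simp
  show "queried_set Q (hard_tournament k (pos \<circ> Transposition.transpose a b)) m = queried_set Q (hard_tournament k pos) m"
    unfolding queried_set_def using h by (intro SUP_cong) auto
qed

lemma sum_ind: "finite A \<Longrightarrow> (\<Sum>x\<in>A. if P x then 1 else (0::nat)) = card {x\<in>A. P x}"
  by (simp add: sum.inter_filter[symmetric])

lemma card_crit:
  assumes "pos permutes {0..<n}" "c \<le> n"
  shows "card {a. a < n \<and> pos a < c} = c"
proof -
  have inj: "inj_on pos {a. a < n \<and> pos a < c}"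
    using permutes_inj[OF assms(1)] by (auto intro: inj_on_subset)
  have "pos ` {a. a < n \<and> pos a < c} = {0..<c}"
  proof
    show "pos ` {a. a < n \<and> pos a < c} \<subseteq> {0..<c}" by auto
    show "{0..<c} \<subseteq> pos ` {a. a < n \<and> pos a < c}"
    proof
      fix y assume "y \<in> {0..<c}"
      then have "y \<in> pos ` {0..<n}" using permutes_image[OF assms(1)] assms(2) by auto
      then obtain x where "x < n" "pos x = y" by auto
      then show "y \<in> pos ` {a. a < n \<and> pos a < c}" using \<open>y \<in> {0..<c}\<close> by auto
    qed
  qed
  then show ?thesis using card_image[OF inj] by simp
qed


lemma card_pair_le: "card {x, y::'a} \<le> 2"
  by (cases "x = y") auto

lemma sum_sigma3: 
  assumes "finite A" "\<And>x. x\<in>A \<Longrightarrow> finite (B x)" "\<And>x. x\<in>A \<Longrightarrow> finite (C x)"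
  shows "(\<Sum>y\<in>Sigma A (\<lambda>x. B x \<times> C x). f y) = (\<Sum>x\<in>A. \<Sum>a\<in>B x. \<Sum>b\<in>C x. (f (x,(a,b))::nat))"
proof -
  have "(\<Sum>x\<in>A. \<Sum>a\<in>B x. \<Sum>b\<in>C x. f (x,(a,b))) = (\<Sum>x\<in>A. \<Sum>ab\<in>B x \<times> C x. f (x,ab))"
    by (rule sum.cong[OF refl]) (simp add: sum.cartesian_product split_def)
  also have "\<dots> = (\<Sum>y\<in>Sigma A (\<lambda>x. B x \<times> C x). f y)"
    using sum.Sigma[of A "\<lambda>x. B x \<times> C x" "\<lambda>x ab. f (x, ab)"] assms by (simp add: split_def)
  finally show ?thesis by simp
qed

lemma comb:
  fixes Q :: "bool list \<Rightarrow> nat \<times> nat" and Out :: "bool list \<Rightarrow> nat set"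
  assumes size: "4*(2*k+1) \<le> n"
    and vq: "\<And>h. length h < n div 4 \<Longrightarrow> fst (Q h) < n \<and> snd (Q h) < n"
    and vo: "\<And>h. length h = n div 4 \<Longrightarrow> Out h \<subseteq> {0..<n} \<and> card (Out h) = 2*k+1"
  shows "2 * (\<Sum>pos\<in>{pos. pos permutes {0..<n}}. card (Out (run_hist Q (hard_tournament k pos) (n div 4)) \<inter> critical_set k n pos))
     \<le> (\<Sum>pos\<in>{pos. pos permutes {0..<n}}. card (critical_set k n pos \<inter> queried_set Q (hard_tournament k pos) (n div 4)))
        + card {pos. pos permutes {0..<n}} * (2*k+1)"
proof -
  define m where "m = n div 4"
  define c where "c = 2*k+1"
  define P where "P = {pos. pos permutes {0..<n}}"
  define S where "S pos = Out (run_hist Q (hard_tournament k pos) m)" for pos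
  define T where "T pos = queried_set Q (hard_tournament k pos) m" for pos
  define U where "U pos = {0..<n} - T pos" for pos
  define C where "C pos = critical_set k n pos" for pos
  have cpos: "c > 0" unfolding c_def by simp
  have cm: "c \<le> m"
  proof -
    have "(4*c) div 4 \<le> n div 4" using size unfolding c_def by (rule div_le_mono)
    then show ?thesis unfolding m_def by simp
  qed
  have mn: "4 * m \<le> n" unfolding m_def by simp
  have finP: "finite P" unfolding P_def by (rule finite_permutations) simp
  have S: "S pos \<subseteq> {0..<n}" "card (S pos) = c" "finite (S pos)" for pos
    using vo[of "run_hist Q (hard_tournament k pos) m"] unfolding S_def m_def c_def
    by (auto intro: finite_subset)
  have T: "T pos \<subseteq> {0..<n}" for pos
  proof
    fix x assume "x \<in> T pos"
    then obtain i where i: "i < m" "x = fst (Q (run_hist Q (hard_tournament k pos) i)) \<or> x = snd (Q (run_hist Q (hard_tournament k pos) i))"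
      unfolding T_def queried_set_def by auto
    have "i < n div 4" using i unfolding m_def by simp
    then have "fst (Q (run_hist Q (hard_tournament k pos) i)) < n \<and> snd (Q (run_hist Q (hard_tournament k pos) i)) < n"
      using vq by simp
    then show "x \<in> {0..<n}" using i by auto
  qed
  have finT: "finite (T pos)" for pos using T finite_subset by blast
  have cardT: "card (T pos) \<le> 2*m" for pos
  proof -
    have "card (T pos) \<le> (\<Sum>i<m. card {fst (Q (run_hist Q (hard_tournament k pos) i)), snd (Q (run_hist Q (hard_tournament k pos) i))})"
      unfolding T_def queried_set_def by (rule card_UN_le) simp
    also have "\<dots> \<le> (\<Sum>i<m. 2)" by (rule sum_mono) (rule card_pair_le)
    finally show ?thesis by simp
  qed
  have finU: "finite (U pos)" for pos unfolding U_def by simp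
  have cardU: "2*c \<le> card (U pos)" for pos
  proof -
    have "card (U pos) = n - card (T pos)" unfolding U_def using T finT by (simp add: card_Diff_subset)
    then show ?thesis using cardT[of pos] cm mn by linarith
  qed
  have C: "C pos = {a. a < n \<and> pos a < c}" for pos unfolding C_def critical_set_def c_def by simp
  have cardC: "pos \<in> P \<Longrightarrow> card (C pos) = c" for pos
    unfolding C P_def using card_crit[of pos n c] cm mn by simp
  have inv: "pos \<circ> Transposition.transpose a b \<in> P \<and> S (pos \<circ> Transposition.transpose a b) = S pos
      \<and> T (pos \<circ> Transposition.transpose a b) = T pos"
    if "pos \<in> P" "a \<in> U pos" "b \<in> U pos" for pos a b
  proof -
    have "a \<notin> T pos" "b \<notin> T pos" "a < n" "b < n" using that unfolding U_def by auto
    then have e: "run_hist Q (hard_tournament k (pos \<circ> Transposition.transpose a b)) m = run_hist Q (hard_tournament k pos) m"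
      "queried_set Q (hard_tournament k (pos \<circ> Transposition.transpose a b)) m = queried_set Q (hard_tournament k pos) m"
      using swap_inv[of a Q k pos m b] unfolding T_def by blast+
    have "Transposition.transpose a b permutes {0..<n}" using \<open>a < n\<close> \<open>b < n\<close> by (intro permutes_swap_id) auto
    then have "pos \<circ> Transposition.transpose a b \<in> P" using that(1) unfolding P_def by (auto intro: permutes_compose)
    then show ?thesis unfolding S_def T_def e by simp
  qed
  define D where "D = Sigma P (\<lambda>pos. (S pos - T pos) \<times> U pos)"
  have finD: "finite D" unfolding D_def using finP S finU by auto
  define \<phi> :: "(nat \<Rightarrow> nat) \<times> nat \<times> nat \<Rightarrow> (nat \<Rightarrow> nat) \<times> nat \<times> nat" where "\<phi> x = (case x of (pos, (a, b)) \<Rightarrow> (pos \<circ> Transposition.transpose a b, (a, b)))" for x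
  have key: "(\<Sum>x\<in>D. case x of (pos, (a, b)) \<Rightarrow> if pos a < c then 1 else (0::nat))
       = (\<Sum>x\<in>D. case x of (pos, (a, b)) \<Rightarrow> if pos b < c then 1 else (0::nat))"
  proof (rule sum.reindex_bij_witness[where i = \<phi> and j = \<phi> and S = D and T = D
      and g = "\<lambda>x. case x of (pos, (a, b)) \<Rightarrow> if pos a < c then 1 else (0::nat)"
      and h = "\<lambda>x. case x of (pos, (a, b)) \<Rightarrow> if pos b < c then 1 else (0::nat)"])
    fix x assume x: "x \<in> D"
    then obtain pos a b where xe: "x = (pos, (a, b))" "pos \<in> P" "a \<in> S pos - T pos" "b \<in> U pos"
      unfolding D_def by auto
    then have aU: "a \<in> U pos" using S(1)[of pos] unfolding U_def by auto
    show "\<phi> (\<phi> x) = x" "\<phi> (\<phi> x) = x" unfolding \<phi>_def xe(1) by (simp_all add: fun_eq_iff)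
    show "\<phi> x \<in> D" "\<phi> x \<in> D" using inv[OF xe(2) aU xe(4)] xe unfolding \<phi>_def D_def U_def by auto
    show "(case \<phi> x of (pos, a, b) \<Rightarrow> if pos b < c then 1 else 0) = (case x of (pos, a, b) \<Rightarrow> if pos a < c then 1 else (0::nat))"
      unfolding \<phi>_def xe(1) by simp
  qed
  define \<alpha> where "\<alpha> pos = card {a \<in> S pos - T pos. pos a < c}" for pos
  define \<beta> where "\<beta> pos = card {b \<in> U pos. pos b < c}" for pos
  have L: "(\<Sum>x\<in>D. case x of (pos, (a, b)) \<Rightarrow> if pos a < c then 1 else (0::nat)) = (\<Sum>pos\<in>P. card (U pos) * \<alpha> pos)"
  proof -
    have "(\<Sum>x\<in>D. case x of (pos, (a, b)) \<Rightarrow> if pos a < c then 1 else (0::nat))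
        = (\<Sum>pos\<in>P. \<Sum>a\<in>S pos - T pos. \<Sum>b\<in>U pos. if pos a < c then 1 else (0::nat))"
      unfolding D_def using finP S finU by (subst sum_sigma3) auto
    also have "\<dots> = (\<Sum>pos\<in>P. card (U pos) * \<alpha> pos)"
      unfolding \<alpha>_def using S by (simp add: sum_distrib_left[symmetric] sum_ind mult.commute)
    finally show ?thesis .
  qed
  have R: "(\<Sum>x\<in>D. case x of (pos, (a, b)) \<Rightarrow> if pos b < c then 1 else (0::nat)) = (\<Sum>pos\<in>P. card (S pos - T pos) * \<beta> pos)"
  proof -
    have "(\<Sum>x\<in>D. case x of (pos, (a, b)) \<Rightarrow> if pos b < c then 1 else (0::nat))
        = (\<Sum>pos\<in>P. \<Sum>a\<in>S pos - T pos. \<Sum>b\<in>U pos. if pos b < c then 1 else (0::nat))"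
      unfolding D_def using finP S finU by (subst sum_sigma3) auto
    also have "\<dots> = (\<Sum>pos\<in>P. card (S pos - T pos) * \<beta> pos)"
      unfolding \<beta>_def using finU by (simp add: sum_ind)
    finally show ?thesis .
  qed
  have "2*c * (\<Sum>pos\<in>P. \<alpha> pos) \<le> (\<Sum>pos\<in>P. card (U pos) * \<alpha> pos)"
    unfolding sum_distrib_left by (rule sum_mono) (simp add: cardU)
  also have "\<dots> = (\<Sum>pos\<in>P. card (S pos - T pos) * \<beta> pos)" using key L R by simp
  also have "\<dots> \<le> (\<Sum>pos\<in>P. c * \<beta> pos)"
  proof (rule sum_mono)
    fix pos show "card (S pos - T pos) * \<beta> pos \<le> c * \<beta> pos"
      using card_mono[of "S pos" "S pos - T pos"] S[of pos] by simp
  qed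
  finally have ab: "2 * (\<Sum>pos\<in>P. \<alpha> pos) \<le> (\<Sum>pos\<in>P. \<beta> pos)"
    using cpos by (simp add: sum_distrib_left[symmetric] mult.assoc)
  have p1: "card (S pos \<inter> C pos) \<le> card (C pos \<inter> T pos) + \<alpha> pos" for pos
  proof -
    have "S pos \<inter> C pos \<subseteq> (C pos \<inter> T pos) \<union> {a \<in> S pos - T pos. pos a < c}"
      unfolding C by auto
    then have "card (S pos \<inter> C pos) \<le> card ((C pos \<inter> T pos) \<union> {a \<in> S pos - T pos. pos a < c})"
      by (rule card_mono[rotated]) (use finT S in auto)
    also have "\<dots> \<le> card (C pos \<inter> T pos) + \<alpha> pos" unfolding \<alpha>_def by (rule card_Un_le)
    finally show ?thesis .
  qed
  have p2: "pos \<in> P \<Longrightarrow> card (C pos \<inter> T pos) + \<beta> pos = c" for pos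
  proof -
    assume "pos \<in> P"
    have "C pos = (C pos \<inter> T pos) \<union> {b \<in> U pos. pos b < c}" unfolding C U_def by auto
    moreover have "card ((C pos \<inter> T pos) \<union> {b \<in> U pos. pos b < c}) = card (C pos \<inter> T pos) + \<beta> pos"
      unfolding \<beta>_def by (rule card_Un_disjoint) (use finT finU in \<open>auto simp: U_def\<close>)
    ultimately show ?thesis using cardC[OF \<open>pos \<in> P\<close>] by simp
  qed
  have "2 * (\<Sum>pos\<in>P. card (S pos \<inter> C pos)) \<le> 2 * (\<Sum>pos\<in>P. card (C pos \<inter> T pos) + \<alpha> pos)"
    using sum_mono[of P "\<lambda>pos. card (S pos \<inter> C pos)", OF p1] by simp
  also have "\<dots> \<le> (\<Sum>pos\<in>P. card (C pos \<inter> T pos)) + (\<Sum>pos\<in>P. card (C pos \<inter> T pos) + \<beta> pos)"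
    using ab by (simp add: sum.distrib)
  also have "(\<Sum>pos\<in>P. card (C pos \<inter> T pos) + \<beta> pos) = card P * c"
    using p2 by simp
  finally show ?thesis unfolding S_def C_def T_def P_def m_def c_def by simp
qed


lemma nn_pair_swap: "(\<integral>\<^sup>+x. f x \<partial>pair_pmf A B) = (\<integral>\<^sup>+b. \<integral>\<^sup>+a. f (a,b) \<partial>A \<partial>B)"
  by (subst pair_commute_pmf) (simp add: nn_integral_pair_pmf' split_def)

lemma pmf_integrable_bounded:
  fixes f :: "'a \<Rightarrow> real"
  assumes "\<And>x. \<bar>f x\<bar> \<le> B"
  shows "integrable (measure_pmf M) f"
  by (rule measure_pmf.integrable_const_bound[where B=B]) (use assms in auto)

lemma crit_card: "card (X \<inter> critical_set k n pos) \<le> n" "card (critical_set k n pos \<inter> X) \<le> n"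
proof -
  have f: "finite (critical_set k n pos)" "critical_set k n pos \<subseteq> {0..<n}"
    unfolding critical_set_def by auto
  have "card (critical_set k n pos) \<le> n" using card_mono[OF _ f(2)] by simp
  then show "card (X \<inter> critical_set k n pos) \<le> n" "card (critical_set k n pos \<inter> X) \<le> n"
    using card_mono[OF f(1), of "X \<inter> critical_set k n pos"] card_mono[OF f(1), of "critical_set k n pos \<inter> X"]
    by auto
qed

theorem mainTheorem8:
  fixes n k :: nat
    and R :: "'r pmf"
    and Q :: "'r \<Rightarrow> bool list \<Rightarrow> nat \<times> nat"
    and Out :: "'r \<Rightarrow> bool list \<Rightarrow> nat set"
  assumes size: "4 * (2*k+1) \<le> n"
    and valid_queries: "\<And>r h. length h < n div 4 \<Longrightarrow>
        fst (Q r h) < n \<and> snd (Q r h) < n \<and> fst (Q r h) \<noteq> snd (Q r h)"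
    and valid_output: "\<And>r h. length h = n div 4 \<Longrightarrow>
        Out r h \<subseteq> {0..<n} \<and> card (Out r h) = 2*k+1"
  shows "measure_pmf.expectation (pair_pmf (instance_pmf n) R)
           (\<lambda>(pos, r). real (card (Out r (run_hist (Q r) (hard_tournament k pos) (n div 4))
                                    \<inter> critical_set k n pos)))
         \<le> measure_pmf.expectation (pair_pmf (instance_pmf n) R)
              (\<lambda>(pos, r). real (card (critical_set k n pos
                                    \<inter> queried_set (Q r) (hard_tournament k pos) (n div 4)))) / 2
           + real (2*k+1) / 2"
proof -
  define P where "P = {pos. pos permutes {0..<(n::nat)}}"
  define A where "A = instance_pmf n"
  define c where "c = real (2*k+1)"
  define F where "F = (\<lambda>(pos, r). real (card (Out r (run_hist (Q r) (hard_tournament k pos) (n div 4))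
                                    \<inter> critical_set k n pos)))"
  define G where "G = (\<lambda>(pos, r). real (card (critical_set k n pos
                                    \<inter> queried_set (Q r) (hard_tournament k pos) (n div 4))))"
  have finP: "finite P" unfolding P_def by (rule finite_permutations) simp
  have neP: "P \<noteq> {}" unfolding P_def using permutes_id by blast
  have A: "A = pmf_of_set P" unfolding A_def P_def instance_pmf_def by simp
  have Fb: "\<bar>F x\<bar> \<le> n" for x unfolding F_def using crit_card by (auto simp: split_def)
  have Gb: "\<bar>G x\<bar> \<le> n" for x unfolding G_def using crit_card by (auto simp: split_def)
  have F0: "F x \<ge> 0" for x unfolding F_def by (simp add: split_def)
  have G0: "G x \<ge> 0" for x unfolding G_def by (simp add: split_def)
  have inner: "2 * measure_pmf.expectation A (\<lambda>pos. F (pos, r)) \<le> measure_pmf.expectation A (\<lambda>pos. G (pos, r)) + c" for r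
  proof -
    have comb': "2 * (\<Sum>pos\<in>P. card (Out r (run_hist (Q r) (hard_tournament k pos) (n div 4)) \<inter> critical_set k n pos))
     \<le> (\<Sum>pos\<in>P. card (critical_set k n pos \<inter> queried_set (Q r) (hard_tournament k pos) (n div 4)))
        + card P * (2*k+1)"
      unfolding P_def by (rule comb[OF size]) (use valid_queries valid_output in auto)
    then have "real (2 * (\<Sum>pos\<in>P. card (Out r (run_hist (Q r) (hard_tournament k pos) (n div 4)) \<inter> critical_set k n pos)))
     \<le> real ((\<Sum>pos\<in>P. card (critical_set k n pos \<inter> queried_set (Q r) (hard_tournament k pos) (n div 4)))
        + card P * (2*k+1))" by (simp only: of_nat_le_iff)
    then have "2 * (\<Sum>pos\<in>P. F (pos, r)) \<le> (\<Sum>pos\<in>P. G (pos, r)) + card P * c"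
      unfolding F_def G_def c_def by (simp add: algebra_simps)
    then have "2 * (\<Sum>pos\<in>P. F (pos, r)) / card P \<le> ((\<Sum>pos\<in>P. G (pos, r)) + card P * c) / card P"
      by (rule divide_right_mono) simp
    moreover have "card P > 0" using finP neP by (simp add: card_gt_0_iff)
    ultimately show ?thesis unfolding A
      using integral_pmf_of_set[OF neP finP] by (simp add: add_divide_distrib)
  qed
  have intF: "integrable (measure_pmf M) (\<lambda>x. 2 * F x)" for M
    by (rule pmf_integrable_bounded[where B="2*n"]) (use Fb in \<open>auto simp: abs_mult\<close>)
  have intG: "integrable (measure_pmf M) (\<lambda>x. G x + c)" for M
    by (rule pmf_integrable_bounded[where B="n + c"]) (use Gb G0 in \<open>auto simp: c_def abs_le_iff\<close>)
  have intF1: "integrable (measure_pmf M) F" for M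
    by (rule pmf_integrable_bounded[where B="n"]) (use Fb in auto)
  have intG1: "integrable (measure_pmf M) G" for M
    by (rule pmf_integrable_bounded[where B="n"]) (use Gb in auto)
  have intFr: "integrable (measure_pmf M) (\<lambda>pos. F (pos, r))" for M r
    by (rule pmf_integrable_bounded[where B="n"]) (use Fb in auto)
  have intGr: "integrable (measure_pmf M) (\<lambda>pos. G (pos, r))" for M r
    by (rule pmf_integrable_bounded[where B="n"]) (use Gb in auto)
  have "ennreal (measure_pmf.expectation (pair_pmf A R) (\<lambda>x. 2 * F x))
      = (\<integral>\<^sup>+x. ennreal (2 * F x) \<partial>pair_pmf A R)"
    by (rule nn_integral_eq_integral[symmetric]) (use intF F0 in auto)
  also have "\<dots> = (\<integral>\<^sup>+r. \<integral>\<^sup>+pos. ennreal (2 * F (pos, r)) \<partial>A \<partial>R)" by (rule nn_pair_swap)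
  also have "\<dots> \<le> (\<integral>\<^sup>+r. \<integral>\<^sup>+pos. ennreal (G (pos, r) + c) \<partial>A \<partial>R)"
  proof (rule nn_integral_mono)
    fix r
    have "(\<integral>\<^sup>+pos. ennreal (2 * F (pos, r)) \<partial>A) = ennreal (measure_pmf.expectation A (\<lambda>pos. 2 * F (pos, r)))"
      by (rule nn_integral_eq_integral) (use intFr F0 in auto)
    also have "\<dots> \<le> ennreal (measure_pmf.expectation A (\<lambda>pos. G (pos, r) + c))"
      using inner[of r] intFr intGr by (intro ennreal_leI) (simp add: c_def)
    also have "\<dots> = (\<integral>\<^sup>+pos. ennreal (G (pos, r) + c) \<partial>A)"
      by (rule nn_integral_eq_integral[symmetric]) (use intGr G0 in \<open>auto simp: c_def\<close>)
    finally show "(\<integral>\<^sup>+pos. ennreal (2 * F (pos, r)) \<partial>A) \<le> (\<integral>\<^sup>+pos. ennreal (G (pos, r) + c) \<partial>A)" .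
  qed
  also have "\<dots> = (\<integral>\<^sup>+x. ennreal (G x + c) \<partial>pair_pmf A R)" by (rule nn_pair_swap[symmetric])
  also have "\<dots> = ennreal (measure_pmf.expectation (pair_pmf A R) (\<lambda>x. G x + c))"
    by (rule nn_integral_eq_integral) (use intG G0 in \<open>auto simp: c_def\<close>)
  finally have "measure_pmf.expectation (pair_pmf A R) (\<lambda>x. 2 * F x) \<le> measure_pmf.expectation (pair_pmf A R) (\<lambda>x. G x + c)"
    using G0 by (subst (asm) ennreal_le_iff) (auto intro!: integral_nonneg_AE simp: c_def)
  then have "2 * measure_pmf.expectation (pair_pmf A R) F \<le> measure_pmf.expectation (pair_pmf A R) G + c"
    using intG1 by simp
  then show ?thesis unfolding F_def G_def A_def c_def by (simp add: field_simps)
qed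

end
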